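(* For natural numbers $n,k$ with $2k\le n$ let $\overrightarrow{N}_{n,k}$ be the digraph with vertex set $\{1,\dots,n\}$ and edge set $\{(i,j):1\le i,j\le n\}\setminus\{(1,2),(3,4),\dots,(2k-1,2k)\}$. Every proper homomorphic image of $\overrightarrow{N}_{n,k}$ (i.e. every digraph $H$ for which there is a non-injective surjective homomorphism $\overrightarrow{N}_{n,k}\to H$) is isomorphic to $\overrightarrow{N}_{m,l}$ for some $m,l$ with $2l<m$. In particular, the set $\{\overrightarrow{N}_{2k,k}:k=1,2,3,\dots\}$ is an antichain under both the standard and the strong homomorphic image orderings.
   Context: A digraph is a set $D$ with a binary relation $E(D)\subseteq D\times D$ (loops allowed). A homomorphism maps edges to edges; it is strong if additionally every edge of the target between vertices of the image is the image of an edge. Standard homomorphic image ordering: $A\preceq B$ iff there is a surjective homomorphism $B\to A$; strong: iff there is a surjective strong homomorphism $B\to A$. An antichain is a set of pairwise incomparable elements. *)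

theory Defs
  imports Main
begin

type_synonym 'a digraph = "'a set \<times> ('a \<times> 'a) set"

definition digraph :: "'a digraph \<Rightarrow> bool" where
  "digraph G \<longleftrightarrow> snd G \<subseteq> fst G \<times> fst G"

definition is_hom :: "('a \<Rightarrow> 'b) \<Rightarrow> 'a digraph \<Rightarrow> 'b digraph \<Rightarrow> bool" where
  "is_hom f G H \<longleftrightarrow> f ` fst G \<subseteq> fst H \<and> (\<forall>(x, y) \<in> snd G. (f x, f y) \<in> snd H)"

definition is_strong_hom :: "('a \<Rightarrow> 'b) \<Rightarrow> 'a digraph \<Rightarrow> 'b digraph \<Rightarrow> bool" where
  "is_strong_hom f G H \<longleftrightarrow> is_hom f G H \<and>
     (\<forall>(a, b) \<in> snd H. a \<in> f ` fst G \<and> b \<in> f ` fst G \<longrightarrow>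
        (\<exists>(x, y) \<in> snd G. f x = a \<and> f y = b))"

definition surj_hom :: "('a \<Rightarrow> 'b) \<Rightarrow> 'a digraph \<Rightarrow> 'b digraph \<Rightarrow> bool" where
  "surj_hom f G H \<longleftrightarrow> is_hom f G H \<and> f ` fst G = fst H"

definition surj_strong_hom :: "('a \<Rightarrow> 'b) \<Rightarrow> 'a digraph \<Rightarrow> 'b digraph \<Rightarrow> bool" where
  "surj_strong_hom f G H \<longleftrightarrow> is_strong_hom f G H \<and> f ` fst G = fst H"

definition hom_image_le :: "'a digraph \<Rightarrow> 'b digraph \<Rightarrow> bool" where
  "hom_image_le A B \<longleftrightarrow> (\<exists>f. surj_hom f B A)"

definition strong_hom_image_le :: "'a digraph \<Rightarrow> 'b digraph \<Rightarrow> bool" where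
  "strong_hom_image_le A B \<longleftrightarrow> (\<exists>f. surj_strong_hom f B A)"

definition digraph_iso :: "'a digraph \<Rightarrow> 'b digraph \<Rightarrow> bool" where
  "digraph_iso G H \<longleftrightarrow> (\<exists>g. bij_betw g (fst G) (fst H) \<and>
     (\<forall>x \<in> fst G. \<forall>y \<in> fst G. (x, y) \<in> snd G \<longleftrightarrow> (g x, g y) \<in> snd H))"

definition Ndig :: "nat \<Rightarrow> nat \<Rightarrow> nat digraph" where
  "Ndig n k = ({1..n}, ({1..n} \<times> {1..n}) - {(2*t - 1, 2*t) | t. 1 \<le> t \<and> t \<le> k})"

end

theory Submission
  imports Defs
begin

lemma key:
  assumes "surj_hom f (Ndig n k) H" "(a,b) \<in> fst H \<times> fst H - snd H"
    "x \<in> {1..n}" "y \<in> {1..n}" "f x = a" "f y = b"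
  shows "\<exists>t. 1 \<le> t \<and> t \<le> k \<and> x = 2*t-1 \<and> y = 2*t"
proof (rule ccontr)
  assume "\<not> ?thesis"
  hence "(x,y) \<in> snd (Ndig n k)" using assms(3,4) unfolding Ndig_def by auto
  hence "(f x, f y) \<in> snd H" using assms(1) unfolding surj_hom_def is_hom_def by auto
  thus False using assms by auto
qed

lemma src_unique:
  assumes "surj_hom f (Ndig n k) H" "(a,b) \<in> fst H \<times> fst H - snd H"
    "x \<in> {1..n}" "y \<in> {1..n}" "f x = a" "f y = a"
  shows "x = y"
proof -
  have "b \<in> f ` {1..n}" using assms(1,2) unfolding surj_hom_def Ndig_def by auto
  then obtain z where z: "z \<in> {1..n}" "f z = b" by auto
  obtain t where t: "1 \<le> t" "x = 2*t-1" "z = 2*t" using key[OF assms(1,2,3) z(1) assms(5) z(2)] by auto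
  obtain s where s: "1 \<le> s" "y = 2*s-1" "z = 2*s" using key[OF assms(1,2,4) z(1) assms(6) z(2)] by auto
  show ?thesis using t s by simp
qed

lemma tgt_unique:
  assumes "surj_hom f (Ndig n k) H" "(a,b) \<in> fst H \<times> fst H - snd H"
    "x \<in> {1..n}" "y \<in> {1..n}" "f x = b" "f y = b"
  shows "x = y"
proof -
  have "a \<in> f ` {1..n}" using assms(1,2) unfolding surj_hom_def Ndig_def by auto
  then obtain z where z: "z \<in> {1..n}" "f z = a" by auto
  obtain t where t: "1 \<le> t" "z = 2*t-1" "x = 2*t" using key[OF assms(1,2) z(1) assms(3) z(2) assms(5)] by auto
  obtain s where s: "1 \<le> s" "z = 2*s-1" "y = 2*s" using key[OF assms(1,2) z(1) assms(4) z(2) assms(6)] by auto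
  show ?thesis using t s by simp
qed

lemma part2:
  assumes "surj_hom f (Ndig (2*k') k') (Ndig (2*k) k)"
  shows "k = k'"
proof -
  have W: "f ` {1..2*k'} = {1..2*k}" using assms unfolding surj_hom_def Ndig_def by auto
  have "inj_on f {1..2*k'}"
  proof (rule inj_onI)
    fix x y assume xy: "x \<in> {1..2*k'}" "y \<in> {1..2*k'}" "f x = f y"
    define v where "v = f x"
    have v: "v \<in> {1..2*k}" using W xy v_def by auto
    show "x = y"
    proof (cases "odd v")
      case True
      define t where "t = (v+1) div 2"
      have t: "v = 2*t - 1" "1 \<le> t" "t \<le> k" using v True t_def by (auto elim!: oddE)
      have "(v, v+1) \<in> fst (Ndig (2*k) k) \<times> fst (Ndig (2*k) k) - snd (Ndig (2*k) k)"
        using t v unfolding Ndig_def by auto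
      thus ?thesis using src_unique[OF assms _ xy(1,2)] xy v_def by auto
    next
      case False
      then obtain t where t: "v = 2*t" "1 \<le> t" "t \<le> k" using v by (auto elim!: evenE)
      have "(v-1, v) \<in> fst (Ndig (2*k) k) \<times> fst (Ndig (2*k) k) - snd (Ndig (2*k) k)"
        using t v unfolding Ndig_def by auto
      thus ?thesis using tgt_unique[OF assms _ xy(1,2)] xy v_def by auto
    qed
  qed
  hence "card {1..2*k'} = card {1..2*k}" using W card_image by fastforce
  thus ?thesis by simp
qed

theorem proposition4p1:
  shows "(\<forall>(n::nat) (k::nat) (H::'a digraph) f.
            2 * k \<le> n \<and> digraph H \<and> surj_hom f (Ndig n k) H \<and> \<not> inj_on f (fst (Ndig n k))
            \<longrightarrow> (\<exists>m l. 2 * l < m \<and> digraph_iso H (Ndig m l)))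
       \<and> (\<forall>k k'. 1 \<le> k \<and> 1 \<le> k' \<and> k \<noteq> k' \<longrightarrow>
            \<not> hom_image_le (Ndig (2*k) k) (Ndig (2*k') k') \<and>
            \<not> strong_hom_image_le (Ndig (2*k) k) (Ndig (2*k') k'))"
proof (intro conjI allI impI)
  fix k k' :: nat assume a: "1 \<le> k \<and> 1 \<le> k' \<and> k \<noteq> k'"
  show "\<not> hom_image_le (Ndig (2*k) k) (Ndig (2*k') k')"
    using part2 a unfolding hom_image_le_def by blast
  show "\<not> strong_hom_image_le (Ndig (2*k) k) (Ndig (2*k') k')"
    using part2 a unfolding strong_hom_image_le_def surj_strong_hom_def is_strong_hom_def surj_hom_def
    by blast
next
  fix n k :: nat and H :: "'a digraph" and f
  assume a: "2 * k \<le> n \<and> digraph H \<and> surj_hom f (Ndig n k) H \<and> \<not> inj_on f (fst (Ndig n k))"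
  have sh: "surj_hom f (Ndig n k) H" using a by blast
  define V where "V = {1..n}"
  define W where "W = fst H"
  define M where "M = W \<times> W - snd H"
  have fV: "f ` V = W" using sh unfolding surj_hom_def Ndig_def V_def W_def by auto
  have finW: "finite W" using fV V_def by auto
  have MW: "M \<subseteq> W \<times> W" using M_def by auto
  have finM: "finite M" using MW finW finite_subset by blast
  have sunq: "x = y" if "(a,b) \<in> M" "x \<in> V" "y \<in> V" "f x = a" "f y = a" for a b x y
    using src_unique[OF sh, of a b x y] that M_def W_def V_def by auto
  have tunq: "x = y" if "(a,b) \<in> M" "x \<in> V" "y \<in> V" "f x = b" "f y = b" for a b x y
    using tgt_unique[OF sh, of a b x y] that M_def W_def V_def by auto
  have keyM: "\<exists>t. 1 \<le> t \<and> t \<le> k \<and> x = 2*t-1 \<and> y = 2*t"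
    if "(a,b) \<in> M" "x \<in> V" "y \<in> V" "f x = a" "f y = b" for a b x y
    using key[OF sh, of a b x y] that M_def W_def V_def by auto
  have pre: "\<exists>x\<in>V. f x = w" if "w \<in> W" for w using fV that by auto
  have fsteq: "b = b'" if asm: "(a,b) \<in> M" "(a,b') \<in> M" for a b b'
  proof -
    obtain x where x: "x \<in> V" "f x = a" using pre MW asm by blast
    obtain y where y: "y \<in> V" "f y = b" using pre MW asm by blast
    obtain y' where y': "y' \<in> V" "f y' = b'" using pre MW asm by blast
    obtain t where t: "x = 2*t-1" "y = 2*t" "1 \<le> t" using keyM[OF asm(1) x(1) y(1) x(2) y(2)] by auto
    obtain s where s: "x = 2*s-1" "y' = 2*s" "1 \<le> s" using keyM[OF asm(2) x(1) y'(1) x(2) y'(2)] by auto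
    have "y = y'" using t s by simp
    thus ?thesis using y y' by simp
  qed
  have sndeq: "a = a'" if asm: "(a,b) \<in> M" "(a',b) \<in> M" for a a' b
  proof -
    obtain x where x: "x \<in> V" "f x = a" using pre MW asm by blast
    obtain x' where x': "x' \<in> V" "f x' = a'" using pre MW asm by blast
    obtain y where y: "y \<in> V" "f y = b" using pre MW asm by blast
    obtain t where t: "x = 2*t-1" "y = 2*t" "1 \<le> t" using keyM[OF asm(1) x(1) y(1) x(2) y(2)] by auto
    obtain s where s: "x' = 2*s-1" "y = 2*s" "1 \<le> s" using keyM[OF asm(2) x'(1) y(1) x'(2) y(2)] by auto
    have "x = x'" using t s by simp
    thus ?thesis using x x' by simp
  qed
  have nocross: False if asm: "(a,b) \<in> M" "(c,a) \<in> M" for a b c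
  proof -
    obtain x where x: "x \<in> V" "f x = a" using pre MW asm by blast
    obtain y where y: "y \<in> V" "f y = b" using pre MW asm by blast
    obtain z where z: "z \<in> V" "f z = c" using pre MW asm by blast
    obtain t where t: "x = 2*t-1" "1 \<le> t" using keyM[OF asm(1) x(1) y(1) x(2) y(2)] by auto
    obtain s where s: "x = 2*s" using keyM[OF asm(2) z(1) x(1) z(2) x(2)] by auto
    show False using t s by presburger
  qed
  define S where "S = fst ` M"
  define T where "T = snd ` M"
  define l where "l = card M"
  have injf: "inj_on fst M" by (rule inj_onI) (metis fsteq prod.collapse)
  have injs: "inj_on snd M" by (rule inj_onI) (metis sndeq prod.collapse)
  have disj: "S \<inter> T = {}" using nocross S_def T_def by force
  have cS: "card S = l" using injf card_image S_def l_def by blast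
  have cT: "card T = l" using injs card_image T_def l_def by blast
  have finS: "finite S" "finite T" using finM S_def T_def by auto
  have cST: "card (S \<union> T) = 2*l" using card_Un_disjoint[OF finS disj] cS cT by simp
  have STW: "S \<union> T \<subseteq> W" using MW S_def T_def by auto
  define R where "R = W - (S \<union> T)"
  define m where "m = card W"
  have cW: "m = 2*l + card R"
  proof -
    have e: "W = (S \<union> T) \<union> R" using STW R_def by auto
    have "card ((S \<union> T) \<union> R) = card (S \<union> T) + card R"
      by (rule card_Un_disjoint) (use finS finW R_def in auto)
    thus ?thesis using e cST m_def by simp
  qed
  have Rne: "R \<noteq> {}"
  proof -
    obtain x y where xy: "x \<in> V" "y \<in> V" "x \<noteq> y" "f x = f y"
      using a unfolding inj_on_def Ndig_def V_def by auto
    have "f x \<notin> S" using sunq xy S_def by force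
    moreover have "f x \<notin> T" using tunq xy T_def by force
    moreover have "f x \<in> W" using fV xy by auto
    ultimately show ?thesis using R_def by auto
  qed
  have finR: "finite R" using finW R_def by auto
  have lm: "2*l < m" using cW Rne finR by (simp add: card_gt_0_iff)
  obtain p where p: "bij_betw p {1..l} M" using ex_bij_betw_nat_finite_1[OF finM] l_def by auto
  obtain q where q: "bij_betw q {0..<card R} R" using ex_bij_betw_nat_finite[OF finR] by auto
  define h where "h i = (if i \<le> 2*l then (if odd i then fst (p ((i+1) div 2)) else snd (p (i div 2)))
      else q (i - (2*l+1)))" for i
  have pM: "p t \<in> M" if "t \<in> {1..l}" for t using p that bij_betwE by blast
  have himg: "h ` {1..m} = W"
  proof
    show "h ` {1..m} \<subseteq> W"
    proof
      fix w assume "w \<in> h ` {1..m}"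
      then obtain i where i: "i \<in> {1..m}" "w = h i" by auto
      show "w \<in> W"
      proof (cases "i \<le> 2*l")
        case True
        show ?thesis
        proof (cases "odd i")
          case True
          have "(i+1) div 2 \<in> {1..l}" using \<open>i \<le> 2*l\<close> i True by (auto elim!: oddE)
          thus ?thesis using pM MW i True \<open>i \<le> 2*l\<close> h_def by force
        next
          case False
          have "i div 2 \<in> {1..l}" using \<open>i \<le> 2*l\<close> i False by auto
          thus ?thesis using pM MW i False \<open>i \<le> 2*l\<close> h_def by force
        qed
      next
        case False
        have "i - (2*l+1) \<in> {0..<card R}" using False i cW by auto
        hence "q (i - (2*l+1)) \<in> R" using q bij_betwE by blast
        thus ?thesis using False i h_def R_def by auto
      qed
    qed
  next
    show "W \<subseteq> h ` {1..m}"
    proof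
      fix w assume w: "w \<in> W"
      show "w \<in> h ` {1..m}"
      proof (cases "w \<in> S")
        case True
        then obtain e where e: "e \<in> M" "w = fst e" using S_def by auto
        then obtain t where t: "t \<in> {1..l}" "p t = e" using p by (metis bij_betw_iff_bijections)
        have "h (2*t-1) = w" using t e h_def by auto
        moreover have "2*t-1 \<in> {1..m}" using t lm by auto
        ultimately show ?thesis by force
      next
        case nS: False
        show ?thesis
        proof (cases "w \<in> T")
          case True
          then obtain e where e: "e \<in> M" "w = snd e" using T_def by auto
          then obtain t where t: "t \<in> {1..l}" "p t = e" using p by (metis bij_betw_iff_bijections)
          have "h (2*t) = w" using t e h_def by auto
          moreover have "2*t \<in> {1..m}" using t lm by auto
          ultimately show ?thesis by force
        next
          case False
          hence "w \<in> R" using nS w R_def by auto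
          then obtain j where j: "j < card R" "q j = w" using q by (metis atLeastLessThan_iff bij_betw_iff_bijections)
          have "h (j + 2*l + 1) = w" using j h_def by auto
          moreover have "j + 2*l + 1 \<in> {1..m}" using j cW by auto
          ultimately show ?thesis by force
        qed
      qed
    qed
  qed
  have hinj: "inj_on h {1..m}"
    by (rule eq_card_imp_inj_on) (simp, subst himg, simp add: m_def)
  have hbij: "bij_betw h {1..m} W" using hinj himg bij_betw_def by blast
  define g where "g = inv_into {1..m} h"
  have gbij: "bij_betw g W {1..m}" using bij_betw_inv_into[OF hbij] g_def by simp
  have equiv: "(h i, h j) \<in> M \<longleftrightarrow> (\<exists>t. 1 \<le> t \<and> t \<le> l \<and> i = 2*t-1 \<and> j = 2*t)"
    if ij: "i \<in> {1..m}" "j \<in> {1..m}" for i j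
  proof
    assume "\<exists>t. 1 \<le> t \<and> t \<le> l \<and> i = 2*t-1 \<and> j = 2*t"
    then obtain t where t: "1 \<le> t" "t \<le> l" "i = 2*t-1" "j = 2*t" by auto
    have "h i = fst (p t)" "h j = snd (p t)" using t h_def by auto
    thus "(h i, h j) \<in> M" using pM t by auto
  next
    assume hm: "(h i, h j) \<in> M"
    have hiS: "h i \<in> S" using hm S_def by force
    have hjT: "h j \<in> T" using hm T_def by force
    have il: "i \<le> 2*l"
    proof (rule ccontr)
      assume "\<not> i \<le> 2*l"
      hence "i - (2*l+1) \<in> {0..<card R}" using ij cW by auto
      hence "q (i - (2*l+1)) \<in> R" using q bij_betwE by blast
      thus False using \<open>\<not> i \<le> 2*l\<close> hiS h_def R_def by auto
    qed
    have jl: "j \<le> 2*l"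
    proof (rule ccontr)
      assume "\<not> j \<le> 2*l"
      hence "j - (2*l+1) \<in> {0..<card R}" using ij cW by auto
      hence "q (j - (2*l+1)) \<in> R" using q bij_betwE by blast
      thus False using \<open>\<not> j \<le> 2*l\<close> hjT h_def R_def by auto
    qed
    have io: "odd i"
    proof (rule ccontr)
      assume "\<not> odd i"
      have "i div 2 \<in> {1..l}" using il ij \<open>\<not> odd i\<close> by auto
      hence "h i \<in> T" using pM il \<open>\<not> odd i\<close> h_def T_def by force
      thus False using hiS disj by auto
    qed
    have je: "even j"
    proof (rule ccontr)
      assume "\<not> even j"
      have "(j+1) div 2 \<in> {1..l}" using jl ij \<open>\<not> even j\<close> by (auto elim!: oddE)
      hence "h j \<in> S" using pM jl \<open>\<not> even j\<close> h_def S_def by force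
      thus False using hjT disj by auto
    qed
    define t where "t = (i+1) div 2"
    define s where "s = j div 2"
    have t: "t \<in> {1..l}" "i = 2*t-1" using il ij io t_def by (auto elim!: oddE)
    have s: "s \<in> {1..l}" "j = 2*s" using jl ij je s_def by auto
    have hi: "h i = fst (p t)" using il io h_def t_def by simp
    have hj: "h j = snd (p s)" using jl je h_def s_def by simp
    have pt: "p t \<in> M" "p s \<in> M" using pM t s by auto
    have "(fst (p t), snd (p s)) \<in> M" using hm hi hj by simp
    hence "snd (p s) = snd (p t)" using fsteq pt by (metis prod.collapse)
    hence "p s = p t" using injs pt inj_on_def by metis
    hence "s = t" using p s t bij_betw_def inj_on_def by metis
    thus "\<exists>t. 1 \<le> t \<and> t \<le> l \<and> i = 2*t-1 \<and> j = 2*t" using t s by auto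
  qed
  have dH: "snd H \<subseteq> W \<times> W" using a unfolding digraph_def W_def by auto
  have "digraph_iso H (Ndig m l)"
    unfolding digraph_iso_def
  proof (intro exI conjI ballI)
    show "bij_betw g (fst H) (fst (Ndig m l))" using gbij W_def Ndig_def by simp
  next
    fix a b assume ab: "a \<in> fst H" "b \<in> fst H"
    have ga: "g a \<in> {1..m}" "g b \<in> {1..m}" using gbij ab W_def bij_betwE by blast+
    have ha: "h (g a) = a" "h (g b) = b" using ab W_def himg g_def by (auto simp: f_inv_into_f)
    have "(a,b) \<in> snd H \<longleftrightarrow> (a,b) \<notin> M" using ab dH M_def W_def by auto
    also have "\<dots> \<longleftrightarrow> \<not> (\<exists>t. 1 \<le> t \<and> t \<le> l \<and> g a = 2*t-1 \<and> g b = 2*t)"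
      using equiv[OF ga] ha by simp
    also have "\<dots> \<longleftrightarrow> (g a, g b) \<in> snd (Ndig m l)" using ga unfolding Ndig_def by auto
    finally show "(a,b) \<in> snd H \<longleftrightarrow> (g a, g b) \<in> snd (Ndig m l)" .
  qed
  thus "\<exists>m l. 2 * l < m \<and> digraph_iso H (Ndig m l)" using lm by blast
qed

end
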